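(* For all $\boldsymbol\mu,\boldsymbol\mu'\in\mathcal P(\mathcal X\times[K])$ and every collection $\boldsymbol\pi=(\pi_k)_{k\in[K]}$ of decision rules $\pi_k:\mathcal X\times\mathcal P(\mathcal X)\to\mathcal P(\mathcal U)$ with $|\pi_k(x,\mu_1)-\pi_k(x,\mu_2)|_1\le L_Q|\mu_1-\mu_2|_1$ for all $x,k,\mu_1,\mu_2$: (a) $|\nu^{\mathrm{MF}}(\boldsymbol\mu,\boldsymbol\pi)[\mathcal U]-\nu^{\mathrm{MF}}(\boldsymbol\mu',\boldsymbol\pi)[\mathcal U]|_1\le|\nu^{\mathrm{MF}}(\boldsymbol\mu,\boldsymbol\pi)-\nu^{\mathrm{MF}}(\boldsymbol\mu',\boldsymbol\pi)|_1\le|\boldsymbol\mu-\boldsymbol\mu'|_1+L_Q|\boldsymbol\mu[\mathcal X]-\boldsymbol\mu'[\mathcal X]|_1$; (b) $\sum_{k\in[K]}|r_k^{\mathrm{MF}}(\boldsymbol\mu,\boldsymbol\pi)-r_k^{\mathrm{MF}}(\boldsymbol\mu',\boldsymbol\pi)|\le S_R'|\boldsymbol\mu-\boldsymbol\mu'|_1+S_R''|\boldsymbol\mu[\mathcal X]-\boldsymbol\mu'[\mathcal X]|_1$; (c) $|P^{\mathrm{MF}}(\boldsymbol\mu,\boldsymbol\pi)[\mathcal X]-P^{\mathrm{MF}}(\boldsymbol\mu',\boldsymbol\pi)[\mathcal X]|_1\le|P^{\mathrm{MF}}(\boldsymbol\mu,\boldsymbol\pi)-P^{\mathrm{MF}}(\boldsymbol\mu',\boldsymbol\pi)|_1\le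 S_P'|\boldsymbol\mu-\boldsymbol\mu'|_1+S_P''|\boldsymbol\mu[\mathcal X]-\boldsymbol\mu'[\mathcal X]|_1$, where $S_R'=M_R+L_R$, $S_R''=M_RL_Q+L_R(1+L_Q)$, $S_P'=1+L_P$, $S_P''=L_Q+L_P(1+L_Q)$.
   Context: $K\ge1$, $[K]=\{1,\dots,K\}$, $\mathcal X,\mathcal U$ finite, $\mathcal P(A)$ the probability distributions on $A$, $|\cdot|_1$ the $L_1$ norm, constants $M_R,L_R,L_P,L_Q>0$. Marginals: for $\boldsymbol\mu$ on $\mathcal X\times[K]$, $\boldsymbol\mu[\mathcal X](x)=\sum_k\boldsymbol\mu(x,k)$; for $\boldsymbol\nu$ on $\mathcal U\times[K]$, $\boldsymbol\nu[\mathcal U](u)=\sum_k\boldsymbol\nu(u,k)$. For each $k$: $r_k:\mathcal X\times\mathcal U\times\mathcal P(\mathcal X)\times\mathcal P(\mathcal U)\to\mathbb R$ and $P_k:\mathcal X\times\mathcal U\times\mathcal P(\mathcal X)\times\mathcal P(\mathcal U)\to\mathcal P(\mathcal X)$ with $|r_k|\le M_R$, $|r_k(x,u,\mu_1,\nu_1)-r_k(x,u,\mu_2,\nu_2)|\le L_R(|\mu_1-\mu_2|_1+|\nu_1-\nu_2|_1)$, $|P_k(x,u,\mu_1,\nu_1)-P_k(x,u,\mu_2,\nu_2)|_1\le L_P(|\mu_1-\mu_2|_1+|\nu_1-\nu_2|_1)$. Mean-field operators: $\nu^{\mathrm{MF}}(\boldsymbol\mu,\boldsymbol\pi)(u,k)=\sum_x\pi_k(x,\boldsymbol\mu[\mathcal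 X])(u)\boldsymbol\mu(x,k)$; $P^{\mathrm{MF}}(\boldsymbol\mu,\boldsymbol\pi)(x',k)=\sum_{x,u}\boldsymbol\mu(x,k)\pi_k(x,\boldsymbol\mu[\mathcal X])(u)P_k(x,u,\boldsymbol\mu[\mathcal X],\nu^{\mathrm{MF}}(\boldsymbol\mu,\boldsymbol\pi)[\mathcal U])(x')$; $r_k^{\mathrm{MF}}(\boldsymbol\mu,\boldsymbol\pi)=\sum_{x,u}\boldsymbol\mu(x,k)\pi_k(x,\boldsymbol\mu[\mathcal X])(u)r_k(x,u,\boldsymbol\mu[\mathcal X],\nu^{\mathrm{MF}}(\boldsymbol\mu,\boldsymbol\pi)[\mathcal U])$. *)

theory Defs
  imports Main "HOL-Analysis.Analysis"
begin

text \<open>A distribution on a finite type is a nonnegative function summing to 1.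
  A distribution on X x [K] is a curried function mu :: 'x => nat => real whose
  relevant values are those with k in {1..K}.\<close>

definition is_dist :: "('a::finite \<Rightarrow> real) \<Rightarrow> bool" where
  "is_dist f \<longleftrightarrow> (\<forall>a. 0 \<le> f a) \<and> (\<Sum>a\<in>UNIV. f a) = 1"

definition is_distK :: "nat \<Rightarrow> ('a::finite \<Rightarrow> nat \<Rightarrow> real) \<Rightarrow> bool" where
  "is_distK K f \<longleftrightarrow> (\<forall>a. \<forall>k\<in>{1..K}. 0 \<le> f a k) \<and> (\<Sum>a\<in>UNIV. \<Sum>k\<in>{1..K}. f a k) = 1"

definition l1 :: "('a::finite \<Rightarrow> real) \<Rightarrow> ('a \<Rightarrow> real) \<Rightarrow> real" where
  "l1 f g = (\<Sum>a\<in>UNIV. \<bar>f a - g a\<bar>)"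

definition l1K :: "nat \<Rightarrow> ('a::finite \<Rightarrow> nat \<Rightarrow> real) \<Rightarrow> ('a \<Rightarrow> nat \<Rightarrow> real) \<Rightarrow> real" where
  "l1K K f g = (\<Sum>a\<in>UNIV. \<Sum>k\<in>{1..K}. \<bar>f a k - g a k\<bar>)"

definition marg :: "nat \<Rightarrow> ('a \<Rightarrow> nat \<Rightarrow> real) \<Rightarrow> 'a \<Rightarrow> real" where
  "marg K f a = (\<Sum>k\<in>{1..K}. f a k)"

text \<open>Mean-field operators. pol k x m u = pi_k(x, m)(u);
  r k x u m n = r_k(x,u,m,n); P k x u m n x' = P_k(x,u,m,n)(x').\<close>
definition nuMF :: "nat \<Rightarrow> ('x::finite \<Rightarrow> nat \<Rightarrow> real)
    \<Rightarrow> (nat \<Rightarrow> 'x \<Rightarrow> ('x \<Rightarrow> real) \<Rightarrow> 'u \<Rightarrow> real) \<Rightarrow> 'u \<Rightarrow> nat \<Rightarrow> real" where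
  "nuMF K mu pol u k = (\<Sum>x\<in>UNIV. pol k x (marg K mu) u * mu x k)"

definition PMF :: "nat \<Rightarrow> (nat \<Rightarrow> 'x \<Rightarrow> 'u \<Rightarrow> ('x \<Rightarrow> real) \<Rightarrow> ('u \<Rightarrow> real) \<Rightarrow> 'x \<Rightarrow> real)
    \<Rightarrow> ('x::finite \<Rightarrow> nat \<Rightarrow> real)
    \<Rightarrow> (nat \<Rightarrow> 'x \<Rightarrow> ('x \<Rightarrow> real) \<Rightarrow> 'u::finite \<Rightarrow> real) \<Rightarrow> 'x \<Rightarrow> nat \<Rightarrow> real" where
  "PMF K P mu pol x' k = (\<Sum>x\<in>UNIV. \<Sum>u\<in>UNIV. mu x k * pol k x (marg K mu) u *
       P k x u (marg K mu) (marg K (nuMF K mu pol)) x')"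

definition rMF :: "nat \<Rightarrow> (nat \<Rightarrow> 'x \<Rightarrow> 'u \<Rightarrow> ('x \<Rightarrow> real) \<Rightarrow> ('u \<Rightarrow> real) \<Rightarrow> real)
    \<Rightarrow> ('x::finite \<Rightarrow> nat \<Rightarrow> real)
    \<Rightarrow> (nat \<Rightarrow> 'x \<Rightarrow> ('x \<Rightarrow> real) \<Rightarrow> 'u::finite \<Rightarrow> real) \<Rightarrow> nat \<Rightarrow> real" where
  "rMF K r mu pol k = (\<Sum>x\<in>UNIV. \<Sum>u\<in>UNIV. mu x k * pol k x (marg K mu) u *
       r k x u (marg K mu) (marg K (nuMF K mu pol)))"

end

theory Submission
  imports Defs
begin

lemma swap3: "(\<Sum>a\<in>A. \<Sum>b\<in>B. \<Sum>c\<in>C. f a b c) = (\<Sum>b\<in>B. \<Sum>c\<in>C. \<Sum>a\<in>A. f a b c)"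
proof -
  have "(\<Sum>a\<in>A. \<Sum>b\<in>B. \<Sum>c\<in>C. f a b c) = (\<Sum>b\<in>B. \<Sum>a\<in>A. \<Sum>c\<in>C. f a b c)" by (rule sum.swap)
  also have "\<dots> = (\<Sum>b\<in>B. \<Sum>c\<in>C. \<Sum>a\<in>A. f a b c)" by (rule sum.cong[OF refl], rule sum.swap)
  finally show ?thesis .
qed

lemma swap4: "(\<Sum>a\<in>A. \<Sum>b\<in>B. \<Sum>c\<in>C. \<Sum>d\<in>D. f a b c d) = (\<Sum>b\<in>B. \<Sum>c\<in>C. \<Sum>d\<in>D. \<Sum>a\<in>A. f a b c d)"
proof -
  have "(\<Sum>a\<in>A. \<Sum>b\<in>B. \<Sum>c\<in>C. \<Sum>d\<in>D. f a b c d) = (\<Sum>b\<in>B. \<Sum>c\<in>C. \<Sum>a\<in>A. \<Sum>d\<in>D. f a b c d)" by (rule swap3)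
  also have "\<dots> = (\<Sum>b\<in>B. \<Sum>c\<in>C. \<Sum>d\<in>D. \<Sum>a\<in>A. f a b c d)" by (rule sum.cong[OF refl], rule sum.cong[OF refl], rule sum.swap)
  finally show ?thesis .
qed

lemma marg_dist:
  assumes "is_distK K mu" shows "is_dist (marg K mu)"
  using assms unfolding is_distK_def is_dist_def marg_def
  by (auto intro: sum_nonneg)

lemma nu_dist:
  fixes mu :: "'x::finite \<Rightarrow> nat \<Rightarrow> real" and pol :: "nat \<Rightarrow> 'x \<Rightarrow> ('x \<Rightarrow> real) \<Rightarrow> 'u::finite \<Rightarrow> real"
  assumes mu: "is_distK K mu" and pd: "\<And>k x m. k \<in> {1..K} \<Longrightarrow> is_dist m \<Longrightarrow> is_dist (pol k x m)"
  shows "is_dist (marg K (nuMF K mu pol))"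
proof -
  have dm: "is_dist (marg K mu)" using marg_dist[OF mu] .
  have pn: "\<And>k x u. k \<in> {1..K} \<Longrightarrow> 0 \<le> pol k x (marg K mu) u" using pd[OF _ dm] unfolding is_dist_def by blast
  have ps: "\<And>k x. k \<in> {1..K} \<Longrightarrow> (\<Sum>u\<in>UNIV. pol k x (marg K mu) u) = 1" using pd[OF _ dm] unfolding is_dist_def by blast
  have mn: "\<And>k x. k \<in> {1..K} \<Longrightarrow> 0 \<le> mu x k" using mu unfolding is_distK_def by blast
  have "(\<Sum>u\<in>UNIV. marg K (nuMF K mu pol) u) = (\<Sum>u\<in>UNIV. \<Sum>k\<in>{1..K}. \<Sum>x\<in>UNIV. pol k x (marg K mu) u * mu x k)"
    unfolding marg_def[of K "nuMF K mu pol"] nuMF_def ..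
  also have "\<dots> = (\<Sum>k\<in>{1..K}. \<Sum>x\<in>UNIV. \<Sum>u\<in>UNIV. pol k x (marg K mu) u * mu x k)" by (rule swap3)
  also have "\<dots> = (\<Sum>k\<in>{1..K}. \<Sum>x\<in>UNIV. mu x k)"
    by (rule sum.cong[OF refl], rule sum.cong[OF refl]) (simp add: sum_distrib_right[symmetric] ps)
  also have "\<dots> = (\<Sum>x\<in>UNIV. \<Sum>k\<in>{1..K}. mu x k)" by (rule sum.swap)
  also have "\<dots> = 1" using mu unfolding is_distK_def by blast
  finally have s: "(\<Sum>u\<in>UNIV. marg K (nuMF K mu pol) u) = 1" .
  have nn: "\<forall>a. 0 \<le> marg K (nuMF K mu pol) a" unfolding marg_def[of K "nuMF K mu pol"] nuMF_def
    using pn mn by (auto intro!: sum_nonneg)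
  show ?thesis unfolding is_dist_def using s nn by blast
qed

lemma marg_l1: "l1 (marg K f) (marg K g) \<le> l1K K f g"
  unfolding l1_def l1K_def marg_def
  by (rule sum_mono) (simp add: sum_subtractf[symmetric] sum_abs)

lemma abs2: "(0::real) \<le> a \<Longrightarrow> 0 \<le> d \<Longrightarrow> \<bar>a*b - c*d\<bar> \<le> a*\<bar>b-d\<bar> + \<bar>a-c\<bar>*d"
proof -
  assume "0 \<le> a" "0 \<le> d"
  have "a*b - c*d = a*(b-d) + (a-c)*d" by (simp add: algebra_simps)
  hence "\<bar>a*b - c*d\<bar> \<le> \<bar>a*(b-d)\<bar> + \<bar>(a-c)*d\<bar>" by (simp only: abs_triangle_ineq)
  thus ?thesis using \<open>0 \<le> a\<close> \<open>0 \<le> d\<close> by (simp add: abs_mult)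
qed

lemma abs3: "(0::real) \<le> a' \<Longrightarrow> 0 \<le> b \<Longrightarrow> 0 \<le> b' \<Longrightarrow>
   \<bar>a*b*c - a'*b'*c'\<bar> \<le> \<bar>a-a'\<bar>*b*\<bar>c\<bar> + a'*\<bar>b-b'\<bar>*\<bar>c\<bar> + a'*b'*\<bar>c-c'\<bar>"
proof -
  assume h: "(0::real) \<le> a'" "0 \<le> b" "0 \<le> b'"
  have "a*b*c - a'*b'*c' = (a-a')*b*c + a'*(b-b')*c + a'*b'*(c-c')" by (simp add: algebra_simps)
  hence "\<bar>a*b*c - a'*b'*c'\<bar> \<le> \<bar>(a-a')*b*c\<bar> + \<bar>a'*(b-b')*c\<bar> + \<bar>a'*b'*(c-c')\<bar>"
    by (simp only: order_trans[OF abs_triangle_ineq add_right_mono[OF abs_triangle_ineq]])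
  thus ?thesis using h by (simp add: abs_mult)
qed

lemma nu_lip:
  fixes mu mu' :: "'x::finite \<Rightarrow> nat \<Rightarrow> real" and pol :: "nat \<Rightarrow> 'x \<Rightarrow> ('x \<Rightarrow> real) \<Rightarrow> 'u::finite \<Rightarrow> real"
  assumes mu: "is_distK K mu" and mu': "is_distK K mu'"
   and pd: "\<And>k x m. k \<in> {1..K} \<Longrightarrow> is_dist m \<Longrightarrow> is_dist (pol k x m)"
   and pl: "\<And>k x m1 m2. k \<in> {1..K} \<Longrightarrow> is_dist m1 \<Longrightarrow> is_dist m2 \<Longrightarrow>
        l1 (pol k x m1) (pol k x m2) \<le> L_Q * l1 m1 m2"
  shows "l1K K (nuMF K mu pol) (nuMF K mu' pol) \<le> l1K K mu mu' + L_Q * l1 (marg K mu) (marg K mu')"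
proof -
  define m where "m = marg K mu"
  define m' where "m' = marg K mu'"
  have dm: "is_dist m" unfolding m_def using marg_dist[OF mu] .
  have dm': "is_dist m'" unfolding m'_def using marg_dist[OF mu'] .
  have pn: "\<And>k x u. k \<in> {1..K} \<Longrightarrow> 0 \<le> pol k x m u" using pd[OF _ dm] unfolding is_dist_def by blast
  have ps: "\<And>k x. k \<in> {1..K} \<Longrightarrow> (\<Sum>u\<in>UNIV. pol k x m u) = 1" using pd[OF _ dm] unfolding is_dist_def by blast
  have mn': "\<And>k x. k \<in> {1..K} \<Longrightarrow> 0 \<le> mu' x k" using mu' unfolding is_distK_def by blast
  have pt: "\<bar>nuMF K mu pol u k - nuMF K mu' pol u k\<bar> \<le> (\<Sum>x\<in>UNIV. pol k x m u * \<bar>mu x k - mu' x k\<bar> + \<bar>pol k x m u - pol k x m' u\<bar> * mu' x k)"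
    if k: "k \<in> {1..K}" for u k
  proof -
    have "nuMF K mu pol u k - nuMF K mu' pol u k = (\<Sum>x\<in>UNIV. pol k x m u * mu x k - pol k x m' u * mu' x k)"
      unfolding nuMF_def m_def m'_def by (simp add: sum_subtractf)
    also have "\<bar>\<dots>\<bar> \<le> (\<Sum>x\<in>UNIV. \<bar>pol k x m u * mu x k - pol k x m' u * mu' x k\<bar>)" by (rule sum_abs)
    also have "\<dots> \<le> (\<Sum>x\<in>UNIV. pol k x m u * \<bar>mu x k - mu' x k\<bar> + \<bar>pol k x m u - pol k x m' u\<bar> * mu' x k)"
      by (rule sum_mono, rule abs2[OF pn[OF k] mn'[OF k]])
    finally show ?thesis .
  qed
  have "l1K K (nuMF K mu pol) (nuMF K mu' pol) \<le> (\<Sum>u\<in>UNIV. \<Sum>k\<in>{1..K}. \<Sum>x\<in>UNIV. pol k x m u * \<bar>mu x k - mu' x k\<bar> + \<bar>pol k x m u - pol k x m' u\<bar> * mu' x k)"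
    unfolding l1K_def by (intro sum_mono pt)
  also have "\<dots> = (\<Sum>k\<in>{1..K}. \<Sum>x\<in>UNIV. \<Sum>u\<in>UNIV. pol k x m u * \<bar>mu x k - mu' x k\<bar> + \<bar>pol k x m u - pol k x m' u\<bar> * mu' x k)"
    by (rule swap3)
  also have "\<dots> = (\<Sum>k\<in>{1..K}. \<Sum>x\<in>UNIV. \<bar>mu x k - mu' x k\<bar> + l1 (pol k x m) (pol k x m') * mu' x k)"
    by (intro sum.cong refl) (simp add: sum.distrib sum_distrib_right[symmetric] ps l1_def)
  also have "\<dots> \<le> (\<Sum>k\<in>{1..K}. \<Sum>x\<in>UNIV. \<bar>mu x k - mu' x k\<bar> + L_Q * l1 m m' * mu' x k)"
    by (intro sum_mono add_left_mono mult_right_mono pl dm dm' mn') auto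
  also have "\<dots> = (\<Sum>k\<in>{1..K}. \<Sum>x\<in>UNIV. \<bar>mu x k - mu' x k\<bar>) + L_Q * l1 m m' * (\<Sum>k\<in>{1..K}. \<Sum>x\<in>UNIV. mu' x k)"
    by (simp add: sum.distrib sum_distrib_left)
  also have "\<dots> = (\<Sum>x\<in>UNIV. \<Sum>k\<in>{1..K}. \<bar>mu x k - mu' x k\<bar>) + L_Q * l1 m m' * (\<Sum>x\<in>UNIV. \<Sum>k\<in>{1..K}. mu' x k)"
    using sum.swap[of "\<lambda>k x. \<bar>mu x k - mu' x k\<bar>" UNIV "{1..K}"] sum.swap[of "\<lambda>k x. mu' x k" UNIV "{1..K}"]
    by simp
  also have "\<dots> = l1K K mu mu' + L_Q * l1 m m'" using mu' unfolding is_distK_def l1K_def by (simp only: mult_1_right)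
  finally show ?thesis unfolding m_def m'_def .
qed

lemma sumkx:
  fixes mu mu' :: "'x::finite \<Rightarrow> nat \<Rightarrow> real"
  assumes mu': "is_distK K mu'"
  shows "(\<Sum>k\<in>{1..K}. \<Sum>x\<in>UNIV. \<alpha> * \<bar>mu x k - mu' x k\<bar> + mu' x k * Z) = \<alpha> * l1K K mu mu' + Z"
proof -
  have "(\<Sum>k\<in>{1..K}. \<Sum>x\<in>UNIV. \<alpha> * \<bar>mu x k - mu' x k\<bar> + mu' x k * Z)
     = \<alpha> * (\<Sum>k\<in>{1..K}. \<Sum>x\<in>UNIV. \<bar>mu x k - mu' x k\<bar>) + (\<Sum>k\<in>{1..K}. \<Sum>x\<in>UNIV. mu' x k) * Z"
    by (simp add: sum.distrib sum_distrib_left sum_distrib_right)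
  also have "\<dots> = \<alpha> * (\<Sum>x\<in>UNIV. \<Sum>k\<in>{1..K}. \<bar>mu x k - mu' x k\<bar>) + (\<Sum>x\<in>UNIV. \<Sum>k\<in>{1..K}. mu' x k) * Z"
    using sum.swap[of "\<lambda>k x. \<bar>mu x k - mu' x k\<bar>" UNIV "{1..K}"] sum.swap[of "\<lambda>k x. mu' x k" UNIV "{1..K}"]
    by simp
  also have "\<dots> = \<alpha> * l1K K mu mu' + Z" using mu' unfolding is_distK_def l1K_def by (simp only: mult_1_left)
  finally show ?thesis .
qed

theorem lemma11:
  fixes K :: nat
    and r :: "nat \<Rightarrow> 'x::finite \<Rightarrow> 'u::finite \<Rightarrow> ('x \<Rightarrow> real) \<Rightarrow> ('u \<Rightarrow> real) \<Rightarrow> real"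
    and P :: "nat \<Rightarrow> 'x \<Rightarrow> 'u \<Rightarrow> ('x \<Rightarrow> real) \<Rightarrow> ('u \<Rightarrow> real) \<Rightarrow> 'x \<Rightarrow> real"
    and pol :: "nat \<Rightarrow> 'x \<Rightarrow> ('x \<Rightarrow> real) \<Rightarrow> 'u \<Rightarrow> real"
    and mu mu' :: "'x \<Rightarrow> nat \<Rightarrow> real"
    and M_R L_R L_P L_Q :: real
  assumes K: "K \<ge> 1"
    and pos: "M_R > 0" "L_R > 0" "L_P > 0" "L_Q > 0"
    and r_bound: "\<And>k x u m n. k \<in> {1..K} \<Longrightarrow> is_dist m \<Longrightarrow> is_dist n \<Longrightarrow> \<bar>r k x u m n\<bar> \<le> M_R"
    and r_lip: "\<And>k x u m1 n1 m2 n2. k \<in> {1..K} \<Longrightarrow> is_dist m1 \<Longrightarrow> is_dist n1 \<Longrightarrow>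
        is_dist m2 \<Longrightarrow> is_dist n2 \<Longrightarrow>
        \<bar>r k x u m1 n1 - r k x u m2 n2\<bar> \<le> L_R * (l1 m1 m2 + l1 n1 n2)"
    and P_dist: "\<And>k x u m n. k \<in> {1..K} \<Longrightarrow> is_dist m \<Longrightarrow> is_dist n \<Longrightarrow> is_dist (P k x u m n)"
    and P_lip: "\<And>k x u m1 n1 m2 n2. k \<in> {1..K} \<Longrightarrow> is_dist m1 \<Longrightarrow> is_dist n1 \<Longrightarrow>
        is_dist m2 \<Longrightarrow> is_dist n2 \<Longrightarrow>
        l1 (P k x u m1 n1) (P k x u m2 n2) \<le> L_P * (l1 m1 m2 + l1 n1 n2)"
    and pi_dist: "\<And>k x m. k \<in> {1..K} \<Longrightarrow> is_dist m \<Longrightarrow> is_dist (pol k x m)"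
    and pi_lip: "\<And>k x m1 m2. k \<in> {1..K} \<Longrightarrow> is_dist m1 \<Longrightarrow> is_dist m2 \<Longrightarrow>
        l1 (pol k x m1) (pol k x m2) \<le> L_Q * l1 m1 m2"
    and mu: "is_distK K mu" and mu': "is_distK K mu'"
  shows
   "l1 (marg K (nuMF K mu pol)) (marg K (nuMF K mu' pol)) \<le> l1K K (nuMF K mu pol) (nuMF K mu' pol)
    \<and> l1K K (nuMF K mu pol) (nuMF K mu' pol) \<le> l1K K mu mu' + L_Q * l1 (marg K mu) (marg K mu')
    \<and> (\<Sum>k\<in>{1..K}. \<bar>rMF K r mu pol k - rMF K r mu' pol k\<bar>)
        \<le> (M_R + L_R) * l1K K mu mu' + (M_R * L_Q + L_R * (1 + L_Q)) * l1 (marg K mu) (marg K mu')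
    \<and> l1 (marg K (PMF K P mu pol)) (marg K (PMF K P mu' pol)) \<le> l1K K (PMF K P mu pol) (PMF K P mu' pol)
    \<and> l1K K (PMF K P mu pol) (PMF K P mu' pol)
        \<le> (1 + L_P) * l1K K mu mu' + (L_Q + L_P * (1 + L_Q)) * l1 (marg K mu) (marg K mu')"
proof -
  define m where "m = marg K mu"
  define m' where "m' = marg K mu'"
  define n where "n = marg K (nuMF K mu pol)"
  define n' where "n' = marg K (nuMF K mu' pol)"
  have dm: "is_dist m" unfolding m_def using marg_dist[OF mu] .
  have dm': "is_dist m'" unfolding m'_def using marg_dist[OF mu'] .
  have dn: "is_dist n" unfolding n_def using nu_dist[OF mu pi_dist] .
  have dn': "is_dist n'" unfolding n'_def using nu_dist[OF mu' pi_dist] .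
  have pn: "\<And>k x u. k \<in> {1..K} \<Longrightarrow> 0 \<le> pol k x m u" using pi_dist[OF _ dm] unfolding is_dist_def by blast
  have ps: "\<And>k x. k \<in> {1..K} \<Longrightarrow> (\<Sum>u\<in>UNIV. pol k x m u) = 1" using pi_dist[OF _ dm] unfolding is_dist_def by blast
  have pn': "\<And>k x u. k \<in> {1..K} \<Longrightarrow> 0 \<le> pol k x m' u" using pi_dist[OF _ dm'] unfolding is_dist_def by blast
  have ps': "\<And>k x. k \<in> {1..K} \<Longrightarrow> (\<Sum>u\<in>UNIV. pol k x m' u) = 1" using pi_dist[OF _ dm'] unfolding is_dist_def by blast
  have mn': "\<And>k x. k \<in> {1..K} \<Longrightarrow> 0 \<le> mu' x k" using mu' unfolding is_distK_def by blast
  have Pn: "\<And>k x u y. k \<in> {1..K} \<Longrightarrow> 0 \<le> P k x u m n y" using P_dist[OF _ dm dn] unfolding is_dist_def by blast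
  have Ps: "\<And>k x u. k \<in> {1..K} \<Longrightarrow> (\<Sum>y\<in>UNIV. P k x u m n y) = 1" using P_dist[OF _ dm dn] unfolding is_dist_def by blast
  have a1: "l1 (marg K (nuMF K mu pol)) (marg K (nuMF K mu' pol)) \<le> l1K K (nuMF K mu pol) (nuMF K mu' pol)"
    by (rule marg_l1)
  have a2: "l1K K (nuMF K mu pol) (nuMF K mu' pol) \<le> l1K K mu mu' + L_Q * l1 m m'"
    unfolding m_def m'_def by (rule nu_lip[OF mu mu' pi_dist pi_lip])
  have nL: "l1 n n' \<le> l1K K mu mu' + L_Q * l1 m m'" using a1 a2 unfolding n_def n'_def by linarith
  define W where "W = l1 m m' + l1 n n'"
  have c1: "l1 (marg K (PMF K P mu pol)) (marg K (PMF K P mu' pol)) \<le> l1K K (PMF K P mu pol) (PMF K P mu' pol)"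
    by (rule marg_l1)
  have cpt: "\<bar>PMF K P mu pol y k - PMF K P mu' pol y k\<bar> \<le> (\<Sum>x\<in>UNIV. \<Sum>u\<in>UNIV.
      \<bar>mu x k - mu' x k\<bar> * pol k x m u * \<bar>P k x u m n y\<bar> + mu' x k * \<bar>pol k x m u - pol k x m' u\<bar> * \<bar>P k x u m n y\<bar>
      + mu' x k * pol k x m' u * \<bar>P k x u m n y - P k x u m' n' y\<bar>)"
    if k: "k \<in> {1..K}" for y k
  proof -
    have eq: "PMF K P mu pol y k - PMF K P mu' pol y k = (\<Sum>x\<in>UNIV. \<Sum>u\<in>UNIV.
        mu x k * pol k x m u * P k x u m n y - mu' x k * pol k x m' u * P k x u m' n' y)"
      unfolding PMF_def m_def m'_def n_def n'_def by (simp add: sum_subtractf)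
    have "\<bar>(\<Sum>x\<in>UNIV. \<Sum>u\<in>UNIV.
        mu x k * pol k x m u * P k x u m n y - mu' x k * pol k x m' u * P k x u m' n' y)\<bar> \<le> (\<Sum>x\<in>UNIV. \<bar>\<Sum>u\<in>UNIV.
        mu x k * pol k x m u * P k x u m n y - mu' x k * pol k x m' u * P k x u m' n' y\<bar>)" by (rule sum_abs)
    also have "\<dots> \<le> (\<Sum>x\<in>UNIV. \<Sum>u\<in>UNIV.
        \<bar>mu x k * pol k x m u * P k x u m n y - mu' x k * pol k x m' u * P k x u m' n' y\<bar>)"
      by (intro sum_mono sum_abs)
    also have "\<dots> \<le> (\<Sum>x\<in>UNIV. \<Sum>u\<in>UNIV.
      \<bar>mu x k - mu' x k\<bar> * pol k x m u * \<bar>P k x u m n y\<bar> + mu' x k * \<bar>pol k x m u - pol k x m' u\<bar> * \<bar>P k x u m n y\<bar>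
      + mu' x k * pol k x m' u * \<bar>P k x u m n y - P k x u m' n' y\<bar>)"
      by (intro sum_mono abs3 mn'[OF k] pn[OF k] pn'[OF k])
    finally show ?thesis by (simp only: eq)
  qed
  have cu: "(\<Sum>y\<in>UNIV.
      \<bar>mu x k - mu' x k\<bar> * pol k x m u * \<bar>P k x u m n y\<bar> + mu' x k * \<bar>pol k x m u - pol k x m' u\<bar> * \<bar>P k x u m n y\<bar>
      + mu' x k * pol k x m' u * \<bar>P k x u m n y - P k x u m' n' y\<bar>)
      = \<bar>mu x k - mu' x k\<bar> * pol k x m u + mu' x k * \<bar>pol k x m u - pol k x m' u\<bar>
      + mu' x k * pol k x m' u * l1 (P k x u m n) (P k x u m' n')"
    if k: "k \<in> {1..K}" for k x u
  proof -
    have "(\<Sum>y\<in>UNIV. \<bar>P k x u m n y\<bar>) = 1" using Ps[OF k] Pn[OF k] by simp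
    thus ?thesis unfolding l1_def by (simp add: sum.distrib sum_distrib_left[symmetric])
  qed
  have cb: "mu' x k * pol k x m' u * l1 (P k x u m n) (P k x u m' n') \<le> mu' x k * pol k x m' u * (L_P * W)"
    if k: "k \<in> {1..K}" for k x u
    unfolding W_def by (intro mult_left_mono P_lip k dm dm' dn dn' mult_nonneg_nonneg mn'[OF k] pn'[OF k])
  have cx: "(\<Sum>u\<in>UNIV. \<bar>mu x k - mu' x k\<bar> * pol k x m u + mu' x k * \<bar>pol k x m u - pol k x m' u\<bar>
      + mu' x k * pol k x m' u * (L_P * W)) = \<bar>mu x k - mu' x k\<bar> + mu' x k * (l1 (pol k x m) (pol k x m') + L_P * W)"
    if k: "k \<in> {1..K}" for k x
  proof -
    have "(\<Sum>u\<in>UNIV. mu' x k * pol k x m' u * (L_P * W)) = mu' x k * (L_P * W)"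
      using ps'[OF k] by (simp add: sum_distrib_right[symmetric] sum_distrib_left[symmetric])
    moreover have "(\<Sum>u\<in>UNIV. \<bar>mu x k - mu' x k\<bar> * pol k x m u) = \<bar>mu x k - mu' x k\<bar>"
      using ps[OF k] by (simp add: sum_distrib_left[symmetric])
    moreover have "(\<Sum>u\<in>UNIV. mu' x k * \<bar>pol k x m u - pol k x m' u\<bar>) = mu' x k * l1 (pol k x m) (pol k x m')"
      unfolding l1_def by (simp add: sum_distrib_left)
    ultimately show ?thesis by (simp add: sum.distrib algebra_simps)
  qed
  have plk: "mu' x k * (l1 (pol k x m) (pol k x m') + L_P * W) \<le> mu' x k * (L_Q * l1 m m' + L_P * W)"
    if k: "k \<in> {1..K}" for k x
    by (intro mult_left_mono add_right_mono pi_lip k dm dm' mn'[OF k])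
  have "l1K K (PMF K P mu pol) (PMF K P mu' pol) \<le> (\<Sum>y\<in>UNIV. \<Sum>k\<in>{1..K}. \<Sum>x\<in>UNIV. \<Sum>u\<in>UNIV.
      \<bar>mu x k - mu' x k\<bar> * pol k x m u * \<bar>P k x u m n y\<bar> + mu' x k * \<bar>pol k x m u - pol k x m' u\<bar> * \<bar>P k x u m n y\<bar>
      + mu' x k * pol k x m' u * \<bar>P k x u m n y - P k x u m' n' y\<bar>)"
    unfolding l1K_def by (intro sum_mono cpt)
  also have "\<dots> = (\<Sum>k\<in>{1..K}. \<Sum>x\<in>UNIV. \<Sum>u\<in>UNIV. \<Sum>y\<in>UNIV.
      \<bar>mu x k - mu' x k\<bar> * pol k x m u * \<bar>P k x u m n y\<bar> + mu' x k * \<bar>pol k x m u - pol k x m' u\<bar> * \<bar>P k x u m n y\<bar>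
      + mu' x k * pol k x m' u * \<bar>P k x u m n y - P k x u m' n' y\<bar>)"
    by (rule swap4)
  also have "\<dots> = (\<Sum>k\<in>{1..K}. \<Sum>x\<in>UNIV. \<Sum>u\<in>UNIV. \<bar>mu x k - mu' x k\<bar> * pol k x m u + mu' x k * \<bar>pol k x m u - pol k x m' u\<bar>
      + mu' x k * pol k x m' u * l1 (P k x u m n) (P k x u m' n'))"
    by (intro sum.cong refl cu) auto
  also have "\<dots> \<le> (\<Sum>k\<in>{1..K}. \<Sum>x\<in>UNIV. \<Sum>u\<in>UNIV. \<bar>mu x k - mu' x k\<bar> * pol k x m u + mu' x k * \<bar>pol k x m u - pol k x m' u\<bar>
      + mu' x k * pol k x m' u * (L_P * W))"
    by (intro sum_mono add_left_mono cb) auto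
  also have "\<dots> = (\<Sum>k\<in>{1..K}. \<Sum>x\<in>UNIV. \<bar>mu x k - mu' x k\<bar> + mu' x k * (l1 (pol k x m) (pol k x m') + L_P * W))"
    by (intro sum.cong refl cx) auto
  also have "\<dots> \<le> (\<Sum>k\<in>{1..K}. \<Sum>x\<in>UNIV. \<bar>mu x k - mu' x k\<bar> + mu' x k * (L_Q * l1 m m' + L_P * W))"
    by (intro sum_mono add_left_mono plk) auto
  also have "\<dots> = 1 * l1K K mu mu' + (L_Q * l1 m m' + L_P * W)"
    using sumkx[OF mu', of 1 mu "L_Q * l1 m m' + L_P * W"] by simp
  finally have c2: "l1K K (PMF K P mu pol) (PMF K P mu' pol) \<le> l1K K mu mu' + (L_Q * l1 m m' + L_P * W)" by simp
  have c3: "l1K K (PMF K P mu pol) (PMF K P mu' pol)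
        \<le> (1 + L_P) * l1K K mu mu' + (L_Q + L_P * (1 + L_Q)) * l1 m m'"
  proof -
    have "L_P * W \<le> L_P * (l1 m m' + (l1K K mu mu' + L_Q * l1 m m'))"
      unfolding W_def using nL pos by (intro mult_left_mono) auto
    thus ?thesis using c2 by (simp add: algebra_simps)
  qed
  have bpt: "\<bar>rMF K r mu pol k - rMF K r mu' pol k\<bar> \<le> (\<Sum>x\<in>UNIV. \<Sum>u\<in>UNIV.
      \<bar>mu x k - mu' x k\<bar> * pol k x m u * M_R + mu' x k * \<bar>pol k x m u - pol k x m' u\<bar> * M_R
      + mu' x k * pol k x m' u * (L_R * W))"
    if k: "k \<in> {1..K}" for k
  proof -
    have eq: "rMF K r mu pol k - rMF K r mu' pol k = (\<Sum>x\<in>UNIV. \<Sum>u\<in>UNIV.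
        mu x k * pol k x m u * r k x u m n - mu' x k * pol k x m' u * r k x u m' n')"
      unfolding rMF_def m_def m'_def n_def n'_def by (simp add: sum_subtractf)
    have "\<bar>(\<Sum>x\<in>UNIV. \<Sum>u\<in>UNIV.
        mu x k * pol k x m u * r k x u m n - mu' x k * pol k x m' u * r k x u m' n')\<bar> \<le> (\<Sum>x\<in>UNIV. \<bar>\<Sum>u\<in>UNIV.
        mu x k * pol k x m u * r k x u m n - mu' x k * pol k x m' u * r k x u m' n'\<bar>)" by (rule sum_abs)
    also have "\<dots> \<le> (\<Sum>x\<in>UNIV. \<Sum>u\<in>UNIV.
        \<bar>mu x k * pol k x m u * r k x u m n - mu' x k * pol k x m' u * r k x u m' n'\<bar>)"
      by (intro sum_mono sum_abs)
    also have "\<dots> \<le> (\<Sum>x\<in>UNIV. \<Sum>u\<in>UNIV.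
      \<bar>mu x k - mu' x k\<bar> * pol k x m u * \<bar>r k x u m n\<bar> + mu' x k * \<bar>pol k x m u - pol k x m' u\<bar> * \<bar>r k x u m n\<bar>
      + mu' x k * pol k x m' u * \<bar>r k x u m n - r k x u m' n'\<bar>)"
      by (intro sum_mono abs3 mn'[OF k] pn[OF k] pn'[OF k])
    also have "\<dots> \<le> (\<Sum>x\<in>UNIV. \<Sum>u\<in>UNIV.
      \<bar>mu x k - mu' x k\<bar> * pol k x m u * M_R + mu' x k * \<bar>pol k x m u - pol k x m' u\<bar> * M_R
      + mu' x k * pol k x m' u * (L_R * W))"
      unfolding W_def
      by (intro sum_mono add_mono mult_left_mono r_bound r_lip k dm dm' dn dn' mult_nonneg_nonneg mn'[OF k] pn[OF k] pn'[OF k] abs_ge_zero)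
    finally show ?thesis by (simp only: eq)
  qed
  have bx: "(\<Sum>u\<in>UNIV. \<bar>mu x k - mu' x k\<bar> * pol k x m u * M_R + mu' x k * \<bar>pol k x m u - pol k x m' u\<bar> * M_R
      + mu' x k * pol k x m' u * (L_R * W)) = M_R * \<bar>mu x k - mu' x k\<bar> + mu' x k * (M_R * l1 (pol k x m) (pol k x m') + L_R * W)"
    if k: "k \<in> {1..K}" for k x
  proof -
    have "(\<Sum>u\<in>UNIV. mu' x k * pol k x m' u * (L_R * W)) = mu' x k * (L_R * W)"
      using ps'[OF k] by (simp add: sum_distrib_right[symmetric] sum_distrib_left[symmetric])
    moreover have "(\<Sum>u\<in>UNIV. \<bar>mu x k - mu' x k\<bar> * pol k x m u * M_R) = M_R * \<bar>mu x k - mu' x k\<bar>"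
      using ps[OF k] by (simp add: sum_distrib_right[symmetric] sum_distrib_left[symmetric])
    moreover have "(\<Sum>u\<in>UNIV. mu' x k * \<bar>pol k x m u - pol k x m' u\<bar> * M_R) = mu' x k * (M_R * l1 (pol k x m) (pol k x m'))"
      unfolding l1_def by (simp add: sum_distrib_left sum_distrib_right algebra_simps)
    ultimately show ?thesis by (simp add: sum.distrib algebra_simps)
  qed
  have bplk: "mu' x k * (M_R * l1 (pol k x m) (pol k x m') + L_R * W) \<le> mu' x k * (M_R * (L_Q * l1 m m') + L_R * W)"
    if k: "k \<in> {1..K}" for k x
    using pos by (intro mult_left_mono add_right_mono pi_lip k dm dm' mn'[OF k]) auto
  have "(\<Sum>k\<in>{1..K}. \<bar>rMF K r mu pol k - rMF K r mu' pol k\<bar>) \<le> (\<Sum>k\<in>{1..K}. \<Sum>x\<in>UNIV. \<Sum>u\<in>UNIV.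
      \<bar>mu x k - mu' x k\<bar> * pol k x m u * M_R + mu' x k * \<bar>pol k x m u - pol k x m' u\<bar> * M_R
      + mu' x k * pol k x m' u * (L_R * W))"
    by (intro sum_mono bpt)
  also have "\<dots> = (\<Sum>k\<in>{1..K}. \<Sum>x\<in>UNIV. M_R * \<bar>mu x k - mu' x k\<bar> + mu' x k * (M_R * l1 (pol k x m) (pol k x m') + L_R * W))"
    by (intro sum.cong refl bx) auto
  also have "\<dots> \<le> (\<Sum>k\<in>{1..K}. \<Sum>x\<in>UNIV. M_R * \<bar>mu x k - mu' x k\<bar> + mu' x k * (M_R * (L_Q * l1 m m') + L_R * W))"
    by (intro sum_mono add_left_mono bplk) auto
  also have "\<dots> = M_R * l1K K mu mu' + (M_R * (L_Q * l1 m m') + L_R * W)"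
    by (rule sumkx[OF mu'])
  finally have b2: "(\<Sum>k\<in>{1..K}. \<bar>rMF K r mu pol k - rMF K r mu' pol k\<bar>) \<le> M_R * l1K K mu mu' + (M_R * (L_Q * l1 m m') + L_R * W)" .
  have b3: "(\<Sum>k\<in>{1..K}. \<bar>rMF K r mu pol k - rMF K r mu' pol k\<bar>)
        \<le> (M_R + L_R) * l1K K mu mu' + (M_R * L_Q + L_R * (1 + L_Q)) * l1 m m'"
  proof -
    have "L_R * W \<le> L_R * (l1 m m' + (l1K K mu mu' + L_Q * l1 m m'))"
      unfolding W_def using nL pos by (intro mult_left_mono) auto
    thus ?thesis using b2 by (simp add: algebra_simps)
  qed
  show ?thesis using a1 a2 b3 c1 c3 unfolding m_def m'_def by blast
qed

end
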